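(* Let $\overrightarrow{C}=\bigcup_{j=1}^t m_j\overrightarrow{C_{n_j}}$ be an oriented 2-regular graph with at least two cycle components, where $n_1<n_2<\dots<n_t$ are the distinct cycle lengths, $m_j\ge1$ is the number of components of length $n_j$, and $\sum_j m_j\ge2$. Let $2\le k\le n_1-1$ be such that $\{k\}$ is a distance set of $\overrightarrow{C}$. Then $\overrightarrow{C}$ is $\{k\}$-antimagic if and only if it is unidirectional.
   Context: An oriented graph is a simple graph each of whose edges is given one direction (an arc $(u,v)$ goes from $u$ to $v$). For vertices $u,v$, $d(u,v)$ is the length of a shortest directed path from $u$ to $v$ ($d(u,u)=0$, $\infty$ if no path). A distance set of an oriented graph is a nonempty set $D$ of nonnegative integers each of which is a finite distance $d(u,v)$ for some pair of vertices. $N_D(v)=\{y : d(v,y)\in D\}$; for a bijection $f:V\to\{1,\dots,|V|\}$, $\omega_D(v)=\sum_{x\in N_D(v)}f(x)$ (empty sum $0$); $f$ is $D$-antimagic if distinct vertices have distinct $D$-weights, and the graph is $D$-antimagic if such an $f$ exists. An oriented 2-regular graph is an orientation of a disjoint union of cycles, each of length at least $3$. A cycle component on $v_1,\dots,v_n$ is unidirectional if (up to relabeling) its arcs are $(v_i,v_{i+1})$, $1\le i\le n-1$, and $(v_n,v_1)$; the oriented 2-regular graph is unidirectional if every cycle component is unidirectional. *)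

theory Defs
  imports Main
begin

text \<open>An oriented graph is given by an arc set A on a vertex set.
  Directed distance: length of a shortest directed walk (= shortest path);
  None encodes infinity.\<close>
definition odist :: "('a \<times> 'a) set \<Rightarrow> 'a \<Rightarrow> 'a \<Rightarrow> nat option" where
  "odist A u v = (if \<exists>n. (u, v) \<in> A ^^ n then Some (LEAST n. (u, v) \<in> A ^^ n) else None)"

definition is_distance_set :: "'a set \<Rightarrow> ('a \<times> 'a) set \<Rightarrow> nat set \<Rightarrow> bool" where
  "is_distance_set V A D \<longleftrightarrow> D \<noteq> {} \<and> (\<forall>d\<in>D. \<exists>u\<in>V. \<exists>v\<in>V. odist A u v = Some d)"

definition D_neighbourhood :: "'a set \<Rightarrow> ('a \<times> 'a) set \<Rightarrow> nat set \<Rightarrow> 'a \<Rightarrow> 'a set" where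
  "D_neighbourhood V A D v = {y \<in> V. \<exists>d\<in>D. odist A v y = Some d}"

definition D_weight :: "'a set \<Rightarrow> ('a \<times> 'a) set \<Rightarrow> nat set \<Rightarrow> ('a \<Rightarrow> nat) \<Rightarrow> 'a \<Rightarrow> nat" where
  "D_weight V A D f v = (\<Sum>x\<in>D_neighbourhood V A D v. f x)"

definition D_antimagic :: "'a set \<Rightarrow> ('a \<times> 'a) set \<Rightarrow> nat set \<Rightarrow> bool" where
  "D_antimagic V A D \<longleftrightarrow>
     (\<exists>f. bij_betw f V {1..card V} \<and> inj_on (D_weight V A D f) V)"

text \<open>A cycle component is given by a list of distinct vertices v_1..v_n;
  its (undirected) edges are {v_i, v_(i+1)} and {v_n, v_1}, recorded as pairs.\<close>
definition cycle_edges :: "'a list \<Rightarrow> ('a \<times> 'a) set" where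
  "cycle_edges c = {(c ! i, c ! ((i + 1) mod length c)) | i. i < length c}"

definition verts :: "'a list list \<Rightarrow> 'a set" where
  "verts cs = (\<Union>c\<in>set cs. set c)"

definition oriented_2regular :: "'a list list \<Rightarrow> ('a \<times> 'a) set \<Rightarrow> bool" where
  "oriented_2regular cs A \<longleftrightarrow>
     (\<forall>c\<in>set cs. distinct c \<and> 3 \<le> length c) \<and>
     (\<forall>i<length cs. \<forall>j<length cs. i \<noteq> j \<longrightarrow> set (cs ! i) \<inter> set (cs ! j) = {}) \<and>
     (let E = (\<Union>c\<in>set cs. cycle_edges c) in
        A \<subseteq> E \<union> E\<inverse> \<and> (\<forall>(u, v)\<in>E. (u, v) \<in> A \<or> (v, u) \<in> A) \<and> A \<inter> A\<inverse> = {})"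

definition unidirectional :: "'a list list \<Rightarrow> ('a \<times> 'a) set \<Rightarrow> bool" where
  "unidirectional cs A \<longleftrightarrow> (\<forall>c\<in>set cs. cycle_edges c \<subseteq> A \<or> (cycle_edges c)\<inverse> \<subseteq> A)"

end

theory Submission
imports Defs
begin

definition cv :: "'a list \<Rightarrow> nat \<Rightarrow> 'a" where
  "cv c t = c ! (t mod length c)"

definition dead :: "('a \<times> 'a) set \<Rightarrow> 'a \<Rightarrow> bool" where
  "dead A x \<longleftrightarrow> (\<forall>y z. (x, y) \<in> A \<longrightarrow> (y, z) \<notin> A)"

lemma mod_cancel_add_int: "((a::int) + k) mod n = (b + k) mod n \<Longrightarrow> a mod n = b mod n"
proof -
  assume h: "(a + k) mod n = (b + k) mod n"
  have "a mod n = ((a + k) mod n - k) mod n" by (simp add: mod_diff_left_eq)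
  also have "\<dots> = ((b + k) mod n - k) mod n" using h by simp
  also have "\<dots> = b mod n" by (simp add: mod_diff_left_eq)
  finally show ?thesis .
qed
lemma mod_cancel_add: "((a::nat) + k) mod n = (b + k) mod n \<Longrightarrow> a mod n = b mod n"
proof -
  assume h: "(a + k) mod n = (b + k) mod n"
  have "int ((a + k) mod n) = int ((b + k) mod n)" using h by simp
  then have "(int a + int k) mod int n = (int b + int k) mod int n" by (simp only: zmod_int of_nat_add)
  then have "int a mod int n = int b mod int n" by (rule mod_cancel_add_int)
  then have "int (a mod n) = int (b mod n)" by (simp only: zmod_int)
  then show ?thesis by simp
qed

lemma ivt_nat: "P a \<Longrightarrow> \<not> P b \<Longrightarrow> a \<le> b \<Longrightarrow> \<exists>s. a \<le> s \<and> s < b \<and> P s \<and> \<not> P (Suc s)"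
proof (induction b)
  case 0 then show ?case by auto
next
  case (Suc b)
  show ?case
  proof (cases "P b")
    case True
    then have "a \<le> b" using Suc.prems by (auto simp: le_Suc_eq)
    then show ?thesis using True Suc.prems by auto
  next
    case False
    have "a \<le> b" using Suc.prems by (cases "a = Suc b") (auto simp: le_Suc_eq)
    from Suc.IH[OF Suc.prems(1) False this] show ?thesis by auto
  qed
qed

lemma cycle_edges_mem: "(x,y) \<in> cycle_edges c \<longleftrightarrow> (\<exists>i<length c. x = c!i \<and> y = c!((i+1) mod length c))"
  unfolding cycle_edges_def by auto

lemma cv_in: "c \<noteq> [] \<Longrightarrow> cv c t \<in> set c" by (simp add: cv_def)
lemma cv_period: "cv c (t + length c) = cv c t" by (simp add: cv_def)
lemma cv_period_mult: "cv c (t + length c * m) = cv c t" by (simp add: cv_def)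
lemma cv_nth: "i < length c \<Longrightarrow> cv c i = c ! i" by (simp add: cv_def)
lemma cv_eq: "distinct c \<Longrightarrow> c \<noteq> [] \<Longrightarrow> cv c a = cv c b \<longleftrightarrow> a mod length c = b mod length c"
  by (simp add: cv_def nth_eq_iff_index_eq)
lemma cv_edge: "c \<noteq> [] \<Longrightarrow> (cv c t, cv c (Suc t)) \<in> cycle_edges c"
  unfolding cycle_edges_mem cv_def
  by (intro exI[of _ "t mod length c"]) (auto simp: mod_Suc_eq)

lemma odist_relpow: "odist A u w = Some k \<Longrightarrow> (u, w) \<in> A ^^ k"
  unfolding odist_def by (auto split: if_splits intro: LeastI_ex)

lemma dead_nbhd:
  assumes "dead A x" "2 \<le> k"
  shows "D_neighbourhood V A {k} x = {}"
proof -
  { fix y assume "odist A x y = Some k"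
    then have r: "(x, y) \<in> A ^^ k" by (rule odist_relpow)
    define m where "m = k - 2"
    have m: "k = Suc (Suc m)" using assms(2) unfolding m_def by simp
    from r obtain a where "(x,a) \<in> A" "(a, y) \<in> A ^^ Suc m" unfolding m by (blast dest: relpow_Suc_D2)
    moreover from this(2) obtain b where "(a,b) \<in> A" by (blast dest: relpow_Suc_D2)
    ultimately have False using assms(1) unfolding dead_def by blast }
  then show ?thesis unfolding D_neighbourhood_def by auto
qed

lemma cycle_edges_rev:
  assumes "c \<noteq> []"
  shows "cycle_edges (rev c) = (cycle_edges c)\<inverse>"
proof (intro set_eqI iffI)
  let ?n = "length c"
  fix p assume "p \<in> cycle_edges (rev c)"
  then obtain i where i: "i < ?n" "p = (rev c ! i, rev c ! ((i+1) mod ?n))"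
    unfolding cycle_edges_def by auto
  show "p \<in> (cycle_edges c)\<inverse>"
  proof (cases "i + 1 < ?n")
    case True
    then have "p = (c ! ((?n - 2 - i) + 1), c ! (?n - 2 - i))" using i by (simp add: rev_nth Suc_diff_Suc)
    moreover have "(c ! (?n - 2 - i), c ! (((?n - 2 - i) + 1) mod ?n)) \<in> cycle_edges c"
      unfolding cycle_edges_mem using True by (intro exI[of _ "?n - 2 - i"]) (simp add: Suc_diff_Suc)
    ultimately show ?thesis using True by auto
  next
    case False
    then have "i = ?n - 1" using i by auto
    then have "p = (c ! 0, c ! (?n - 1))" using i assms by (simp add: rev_nth)
    moreover have "(c ! (?n - 1), c ! (((?n - 1) + 1) mod ?n)) \<in> cycle_edges c"
      unfolding cycle_edges_mem using assms by (intro exI[of _ "?n - 1"]) auto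
    ultimately show ?thesis using assms by auto
  qed
next
  let ?n = "length c"
  fix p assume "p \<in> (cycle_edges c)\<inverse>"
  then obtain j where j: "j < ?n" "p = (c ! ((j+1) mod ?n), c ! j)"
    unfolding cycle_edges_def by auto
  show "p \<in> cycle_edges (rev c)"
  proof (cases "j + 1 < ?n")
    case True
    have "(rev c ! (?n - 2 - j), rev c ! (((?n - 2 - j) + 1) mod ?n)) \<in> cycle_edges (rev c)"
      unfolding cycle_edges_mem using True by (intro exI[of _ "?n - 2 - j"]) simp
    moreover have "rev c ! (?n - 2 - j) = c ! (j+1)" "rev c ! (((?n - 2 - j) + 1) mod ?n) = c ! j"
      using True by (auto simp: rev_nth Suc_diff_Suc)
    ultimately show ?thesis using j True by auto
  next
    case False
    then have jj: "j = ?n - 1" using j by auto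
    have "(rev c ! (?n - 1), rev c ! (((?n - 1) + 1) mod ?n)) \<in> cycle_edges (rev c)"
      unfolding cycle_edges_mem using assms by (intro exI[of _ "?n - 1"]) auto
    moreover have "rev c ! (?n - 1) = c ! 0" "rev c ! (((?n - 1) + 1) mod ?n) = c ! (?n - 1)"
      using assms by (auto simp: rev_nth)
    ultimately show ?thesis using j jj assms by auto
  qed
qed

lemma mod_ne: "(a::nat) mod n = (a + d) mod n \<Longrightarrow> 0 < d \<Longrightarrow> d < n \<Longrightarrow> False"
  using mod_cancel_add[of 0 a n d] by (simp add: add.commute)

context
  fixes cs :: "'a list list" and A :: "('a \<times> 'a) set"
  assumes o2: "oriented_2regular cs A"
begin

lemma cyc: "c \<in> set cs \<Longrightarrow> distinct c \<and> 3 \<le> length c"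
  using o2 unfolding oriented_2regular_def by auto

lemma cyc_ne: "c \<in> set cs \<Longrightarrow> c \<noteq> []"
  using cyc by fastforce

lemma same_cycle:
  assumes "c \<in> set cs" "d \<in> set cs" "x \<in> set c" "x \<in> set d"
  shows "c = d"
proof -
  obtain i where i: "i < length cs" "c = cs ! i" using assms(1) by (auto simp: in_set_conv_nth)
  obtain j where j: "j < length cs" "d = cs ! j" using assms(2) by (auto simp: in_set_conv_nth)
  have "i = j"
  proof (rule ccontr)
    assume "i \<noteq> j"
    moreover have "\<forall>i<length cs. \<forall>j<length cs. i \<noteq> j \<longrightarrow> set (cs ! i) \<inter> set (cs ! j) = {}"
      using o2 unfolding oriented_2regular_def by (rule conjunct1[OF conjunct2])
    ultimately have "set (cs ! i) \<inter> set (cs ! j) = {}" using i j by blast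
    then show False using assms i j by auto
  qed
  then show ?thesis using i j by simp
qed

lemma o2_parts: "let E = (\<Union>c\<in>set cs. cycle_edges c) in
        A \<subseteq> E \<union> E\<inverse> \<and> (\<forall>(u, v)\<in>E. (u, v) \<in> A \<or> (v, u) \<in> A) \<and> A \<inter> A\<inverse> = {}"
  using o2 unfolding oriented_2regular_def by (rule conjunct2[OF conjunct2])

lemma Asub: "(u,v) \<in> A \<Longrightarrow> \<exists>d\<in>set cs. (u,v) \<in> cycle_edges d \<or> (v,u) \<in> cycle_edges d"
proof -
  assume a: "(u,v) \<in> A"
  have "A \<subseteq> (\<Union>c\<in>set cs. cycle_edges c) \<union> (\<Union>c\<in>set cs. cycle_edges c)\<inverse>"
    using o2_parts unfolding Let_def by (rule conjunct1)
  with a show ?thesis by blast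
qed

lemma Aor: "d \<in> set cs \<Longrightarrow> (u,v) \<in> cycle_edges d \<Longrightarrow> (u,v) \<in> A \<or> (v,u) \<in> A"
proof -
  assume a: "d \<in> set cs" "(u,v) \<in> cycle_edges d"
  have "\<forall>(u, v)\<in>(\<Union>c\<in>set cs. cycle_edges c). (u, v) \<in> A \<or> (v, u) \<in> A"
    using o2_parts unfolding Let_def by (rule conjunct1[OF conjunct2])
  with a show ?thesis by blast
qed

lemma Aasym: "(u,v) \<in> A \<Longrightarrow> (v,u) \<notin> A"
proof -
  have "A \<inter> A\<inverse> = {}"
    using o2_parts unfolding Let_def by (rule conjunct2[OF conjunct2])
  then show "(u,v) \<in> A \<Longrightarrow> (v,u) \<notin> A" by blast
qed

lemma arcs:
  assumes c: "c \<in> set cs" and a: "(cv c t, w) \<in> A"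
  shows "(w = cv c (Suc t) \<and> (cv c t, cv c (Suc t)) \<in> A) \<or>
         (w = cv c (t + length c - 1) \<and> (cv c (t + length c - 1), cv c (Suc (t + length c - 1))) \<notin> A)"
proof -
  let ?n = "length c"
  have ne: "c \<noteq> []" and dc: "distinct c" and n3: "3 \<le> ?n" using cyc[OF c] by auto
  have inc: "cv c t \<in> set c" using cv_in[OF ne] .
  have sn: "Suc (t + ?n - 1) = t + ?n" using n3 by simp
  obtain d where d: "d \<in> set cs" and e: "(cv c t, w) \<in> cycle_edges d \<or> (w, cv c t) \<in> cycle_edges d"
    using Asub[OF a] by blast
  show ?thesis
    using e
  proof
    assume e1: "(cv c t, w) \<in> cycle_edges d"
    then obtain j where j: "j < length d" "cv c t = d ! j" "w = d ! ((j+1) mod length d)"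
      unfolding cycle_edges_mem by auto
    have "d = c" using same_cycle[OF d c _ inc] j by auto
    then have "cv c j = cv c t" using j by (simp add: cv_nth)
    then have "j mod ?n = t mod ?n" using cv_eq[OF dc ne] by simp
    then have "w = cv c (Suc t)" using j \<open>d = c\<close> by (simp add: cv_def mod_Suc_eq)
    then show ?thesis using a by simp
  next
    assume e2: "(w, cv c t) \<in> cycle_edges d"
    then obtain j where j: "j < length d" "w = d ! j" "cv c t = d ! ((j+1) mod length d)"
      unfolding cycle_edges_mem by auto
    have "d ! ((j+1) mod length d) \<in> set d" using j(1) by (intro nth_mem mod_less_divisor) (cases d; simp)
    then have dc': "d = c" using same_cycle[OF d c _ inc] j by auto
    then have "cv c (Suc j) = cv c t" using j by (simp add: cv_def)
    also have "cv c t = cv c (Suc (t + ?n - 1))" unfolding sn using cv_period[of c t] by simp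
    finally have "Suc j mod ?n = Suc (t + ?n - 1) mod ?n" using cv_eq[OF dc ne] by simp
    then have "j mod ?n = (t + ?n - 1) mod ?n" using mod_cancel_add[of j 1 ?n "t + ?n - 1"] by simp
    then have w: "w = cv c (t + ?n - 1)" using j dc' by (simp add: cv_def)
    have "cv c (Suc (t + ?n - 1)) = cv c t" unfolding sn using cv_period[of c t] by simp
    then have "(cv c (t + ?n - 1), cv c (Suc (t + ?n - 1))) \<notin> A" using w Aasym[OF a] by simp
    then show ?thesis using w by simp
  qed
qed


lemma two_dead:
  assumes c: "c \<in> set cs" and nf: "\<not> cycle_edges c \<subseteq> A" and nb: "\<not> (cycle_edges c)\<inverse> \<subseteq> A"
  shows "\<exists>x\<in>set c. \<exists>y\<in>set c. x \<noteq> y \<and> dead A x \<and> dead A y"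
proof -
  let ?n = "length c"
  have ne: "c \<noteq> []" and dc: "distinct c" and n3: "3 \<le> ?n" using cyc[OF c] by auto
  define b where "b t = ((cv c t, cv c (Suc t)) \<in> A)" for t
  have bper: "b (t + ?n * m) = b t" for t m
  proof -
    have "Suc (t + ?n * m) = Suc t + ?n * m" by simp
    then show ?thesis unfolding b_def by (simp only: cv_period_mult)
  qed
  have bor: "b t \<or> (cv c (Suc t), cv c t) \<in> A" for t
    using Aor[OF c cv_edge[OF ne]] unfolding b_def by blast
  have outs: "(w = cv c (Suc t) \<and> b t) \<or> (w = cv c (t + ?n - 1) \<and> \<not> b (t + ?n - 1))"
    if "(cv c t, w) \<in> A" for t w
    using arcs[OF c that] unfolding b_def by blast
  have noout: "(cv c (Suc s), w) \<notin> A" if "b s" "\<not> b (Suc s)" for s w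
    proof
      assume "(cv c (Suc s), w) \<in> A"
      from outs[OF this] that have "\<not> b (Suc s + ?n - 1)" by blast
      moreover have "Suc s + ?n - 1 = s + ?n * 1" using n3 by simp
      ultimately show False using bper[of s 1] that by simp
    qed
  have sink: "dead A (cv c (Suc s))" if "b s" "\<not> b (Suc s)" for s
    using noout[OF that] unfolding dead_def by blast
  have inset: "cv c t \<in> set c" for t using cv_in[OF ne] .
  have dist: "cv c a \<noteq> cv c (a + d)" if "0 < d" "d < ?n" for a d
    using mod_ne[of a ?n d] that cv_eq[OF dc ne] by blast
  obtain t0 where t0: "\<not> b t0"
  proof -
    from nf obtain x y where xy: "(x,y) \<in> cycle_edges c" "(x,y) \<notin> A" by auto
    then obtain i where "i < ?n" "x = c ! i" "y = c ! ((i+1) mod ?n)" unfolding cycle_edges_mem by auto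
    then have "x = cv c i" "y = cv c (Suc i)" by (simp_all add: cv_def)
    then show ?thesis using that xy unfolding b_def by auto
  qed
  obtain t1 where t1: "b t1"
  proof -
    from nb obtain x y where xy: "(x,y) \<in> cycle_edges c" "(y,x) \<notin> A" by auto
    then obtain i where "i < ?n" "x = c ! i" "y = c ! ((i+1) mod ?n)" unfolding cycle_edges_mem by auto
    then have "x = cv c i" "y = cv c (Suc i)" by (simp_all add: cv_def)
    then show ?thesis using that xy bor[of i] by auto
  qed
  have "\<not> b (t0 + ?n * Suc t1)" using t0 bper[of t0 "Suc t1"] by argo
  moreover have "t1 \<le> t0 + ?n * Suc t1" using n3 by (simp add: trans_le_add2)
  ultimately obtain s where s: "b s" "\<not> b (Suc s)" using ivt_nat[of b t1] t1 by blast
  have ds: "dead A (cv c (Suc s))" using sink[OF s] .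
  have nos: "(cv c (Suc s), w) \<notin> A" for w using noout[OF s] .
  show ?thesis
  proof (cases "b (s + ?n - 1)")
    case True
    have "dead A (cv c s)" unfolding dead_def
    proof (intro allI impI)
      fix y z assume "(cv c s, y) \<in> A"
      from outs[OF this] True have "y = cv c (Suc s)" by blast
      then show "(y, z) \<notin> A" using nos by blast
    qed
    moreover have "cv c s \<noteq> cv c (Suc s)" using dist[of 1 s] n3 by simp
    ultimately show ?thesis using ds inset by blast
  next
    case F1: False
    show ?thesis
    proof (cases "b (Suc (Suc s))")
      case False
      have "dead A (cv c (Suc (Suc s)))" unfolding dead_def
      proof (intro allI impI)
        fix y z assume "(cv c (Suc (Suc s)), y) \<in> A"
        from outs[OF this] False have "y = cv c (Suc (Suc s) + ?n - 1)" by blast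
        also have "Suc (Suc s) + ?n - 1 = Suc s + ?n * 1" using n3 by simp
        also have "cv c (Suc s + ?n * 1) = cv c (Suc s)" using cv_period_mult by blast
        finally show "(y, z) \<notin> A" using nos by blast
      qed
      moreover have "cv c (Suc s) \<noteq> cv c (Suc s + 1)" using dist[of 1 "Suc s"] n3 by simp
      ultimately show ?thesis using ds inset by auto
    next
      case True
      have "Suc (Suc s) \<le> s + ?n - 1" using n3 by simp
      then obtain s' where s': "Suc (Suc s) \<le> s'" "s' < s + ?n - 1" "b s'" "\<not> b (Suc s')"
        using ivt_nat[of b "Suc (Suc s)" "s + ?n - 1"] True F1 by blast
      have d2: "dead A (cv c (Suc s'))" using sink[OF s'(3,4)] .
      have "Suc s' = Suc s + (s' - s)" using s' by simp
      moreover have "cv c (Suc s) \<noteq> cv c (Suc s + (s' - s))" using dist[of "s' - s" "Suc s"] s' by simp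
      ultimately show ?thesis using ds d2 inset by metis
    qed
  qed
qed


lemma fwd_antimagic:
  assumes fwd: "\<forall>c\<in>set cs. cycle_edges c \<subseteq> A" and kn: "\<forall>c\<in>set cs. k < length c"
  shows "D_antimagic (verts cs) A {k}"
proof -
  let ?V = "verts cs"
  have inV: "cv c t \<in> ?V" if "c \<in> set cs" for c t
    using cv_in[OF cyc_ne[OF that]] that unfolding verts_def by blast
  have edgeA: "(cv c t, cv c (Suc t)) \<in> A" if "c \<in> set cs" for c t
    using fwd that cv_edge[OF cyc_ne[OF that]] by blast
  have step: "(cv c t, w) \<in> A \<longleftrightarrow> w = cv c (Suc t)" if c: "c \<in> set cs" for c t w
  proof
    assume a: "(cv c t, w) \<in> A"
    show "w = cv c (Suc t)" using arcs[OF c a] edgeA[OF c] by blast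
  next
    assume "w = cv c (Suc t)"
    then show "(cv c t, w) \<in> A" using edgeA[OF c] by simp
  qed
  have walk: "(cv c t, w) \<in> A ^^ m \<longleftrightarrow> w = cv c (t + m)" if c: "c \<in> set cs" for c t m w
  proof (induction m arbitrary: w)
    case 0 then show ?case by auto
  next
    case (Suc m)
    have "(cv c t, w) \<in> A ^^ Suc m \<longleftrightarrow> (\<exists>y. (cv c t, y) \<in> A ^^ m \<and> (y, w) \<in> A)" by auto
    also have "\<dots> \<longleftrightarrow> (cv c (t + m), w) \<in> A" using Suc.IH by auto
    also have "\<dots> \<longleftrightarrow> w = cv c (Suc (t + m))" using step[OF c] by simp
    finally show ?case by simp
  qed
  have od: "odist A (cv c t) w = Some k \<longleftrightarrow> w = cv c (t + k)" if c: "c \<in> set cs" for c t w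
  proof
    assume "odist A (cv c t) w = Some k"
    then have "(cv c t, w) \<in> A ^^ k" by (rule odist_relpow)
    then show "w = cv c (t + k)" using walk[OF c] by simp
  next
    assume w: "w = cv c (t + k)"
    have ne: "c \<noteq> []" and dc: "distinct c" using cyc[OF c] by auto
    have kc: "k < length c" using kn c by blast
    have r: "(cv c t, w) \<in> A ^^ k" using walk[OF c] w by simp
    have "(LEAST n. (cv c t, w) \<in> A ^^ n) = k"
    proof (rule Least_equality)
      show "(cv c t, w) \<in> A ^^ k" by (rule r)
    next
      fix m assume "(cv c t, w) \<in> A ^^ m"
      then have "cv c (t + m) = cv c (t + k)" using walk[OF c] w by simp
      then have eq: "(t + m) mod length c = (t + m + (k - m)) mod length c" if "m < k"
        using cv_eq[OF dc ne] that by simp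
      show "k \<le> m"
      proof (rule ccontr)
        assume "\<not> k \<le> m"
        then have "m < k" by simp
        have "k - m < length c" using kc by simp
        then show False using mod_ne[OF eq[OF \<open>m < k\<close>]] \<open>m < k\<close> by simp
      qed
    qed
    moreover have "\<exists>n. (cv c t, w) \<in> A ^^ n" using r by blast
    ultimately show "odist A (cv c t) w = Some k" unfolding odist_def by simp
  qed
  have nb: "D_neighbourhood ?V A {k} (cv c t) = {cv c (t + k)}" if c: "c \<in> set cs" for c t
  proof (rule set_eqI)
    fix y show "y \<in> D_neighbourhood ?V A {k} (cv c t) \<longleftrightarrow> y \<in> {cv c (t + k)}"
      unfolding D_neighbourhood_def using od[OF c, of t y] inV[OF c, of "t + k"] by auto
  qed
  have wt: "D_weight ?V A {k} f (cv c t) = f (cv c (t + k))" if c: "c \<in> set cs" for c t f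
    unfolding D_weight_def nb[OF c] by simp
  have fin: "finite ?V" unfolding verts_def by simp
  obtain f where f: "bij_betw f ?V {1..card ?V}"
    using finite_same_card_bij[OF fin, of "{1..card ?V}"] by auto
  have finj: "inj_on f ?V" using f bij_betw_imp_inj_on by blast
  have "inj_on (D_weight ?V A {k} f) ?V"
  proof (rule inj_onI)
    fix x y assume x: "x \<in> ?V" and y: "y \<in> ?V" and e: "D_weight ?V A {k} f x = D_weight ?V A {k} f y"
    obtain c where c: "c \<in> set cs" "x \<in> set c" using x unfolding verts_def by blast
    obtain i where i: "i < length c" "x = cv c i" using c(2) by (auto simp: in_set_conv_nth cv_nth)
    obtain d where d: "d \<in> set cs" "y \<in> set d" using y unfolding verts_def by blast
    obtain j where j: "j < length d" "y = cv d j" using d(2) by (auto simp: in_set_conv_nth cv_nth)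
    have "f (cv c (i + k)) = f (cv d (j + k))" using e wt[OF c(1)] wt[OF d(1)] i j by simp
    then have ee: "cv c (i + k) = cv d (j + k)" using finj inV[OF c(1)] inV[OF d(1)] by (meson inj_onD)
    have "cv c (i + k) \<in> set d" using ee cv_in[OF cyc_ne[OF d(1)]] by simp
    then have "d = c" using same_cycle[OF d(1) c(1) _ cv_in[OF cyc_ne[OF c(1)]]] by blast
    then have "cv c (i + k) = cv c (j + k)" using ee by simp
    then have "(i + k) mod length c = (j + k) mod length c"
      using cv_eq[of c] cyc[OF c(1)] cyc_ne[OF c(1)] by simp
    then have "i mod length c = j mod length c" by (rule mod_cancel_add)
    then show "x = y" using i j \<open>d = c\<close> by (simp add: cv_def)
  qed
  then show ?thesis unfolding D_antimagic_def using f by blast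
qed

end


definition gnorm :: "('a \<times> 'a) set \<Rightarrow> 'a list \<Rightarrow> 'a list" where
  "gnorm A c = (if cycle_edges c \<subseteq> A then c else rev c)"

lemma gnorm_basic:
  "set (gnorm A c) = set c" "length (gnorm A c) = length c" "distinct (gnorm A c) = distinct c"
  unfolding gnorm_def by auto

lemma gnorm_edges:
  assumes "c \<noteq> []"
  shows "cycle_edges (gnorm A c) \<union> (cycle_edges (gnorm A c))\<inverse> = cycle_edges c \<union> (cycle_edges c)\<inverse>"
  unfolding gnorm_def using cycle_edges_rev[OF assms] by auto

lemma gnorm_fwd:
  assumes "c \<noteq> []" "cycle_edges c \<subseteq> A \<or> (cycle_edges c)\<inverse> \<subseteq> A"
  shows "cycle_edges (gnorm A c) \<subseteq> A"
  unfolding gnorm_def using cycle_edges_rev[OF assms(1)] assms(2) by auto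

lemma verts_gnorm: "verts (map (gnorm A) cs) = verts cs"
  unfolding verts_def by (simp add: gnorm_basic)

lemma o2_gnorm:
  assumes o2: "oriented_2regular cs A"
  shows "oriented_2regular (map (gnorm A) cs) A"
proof -
  let ?cs = "map (gnorm A) cs"
  let ?E = "\<Union>c\<in>set cs. cycle_edges c"
  let ?F = "\<Union>c\<in>set ?cs. cycle_edges c"
  have p1: "\<forall>c\<in>set ?cs. distinct c \<and> 3 \<le> length c"
  proof
    fix c assume "c \<in> set ?cs"
    then obtain c0 where c0: "c0 \<in> set cs" "c = gnorm A c0" by auto
    show "distinct c \<and> 3 \<le> length c" using cyc[OF o2 c0(1)] c0(2) by (simp add: gnorm_basic)
  qed
  have q2: "\<forall>i<length cs. \<forall>j<length cs. i \<noteq> j \<longrightarrow> set (cs ! i) \<inter> set (cs ! j) = {}"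
    using o2 unfolding oriented_2regular_def by (rule conjunct1[OF conjunct2])
  have p2: "\<forall>i<length ?cs. \<forall>j<length ?cs. i \<noteq> j \<longrightarrow> set (?cs ! i) \<inter> set (?cs ! j) = {}"
  proof (intro allI impI)
    fix i j assume ij: "i < length ?cs" "j < length ?cs" "i \<noteq> j"
    have "set (?cs ! i) = set (cs ! i)" "set (?cs ! j) = set (cs ! j)" using ij by (simp_all add: gnorm_basic)
    moreover have "set (cs ! i) \<inter> set (cs ! j) = {}" using q2 ij by simp
    ultimately show "set (?cs ! i) \<inter> set (?cs ! j) = {}" by simp
  qed
  have q3: "A \<subseteq> ?E \<union> ?E\<inverse> \<and> (\<forall>(u, v)\<in>?E. (u, v) \<in> A \<or> (v, u) \<in> A) \<and> A \<inter> A\<inverse> = {}"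
    using o2_parts[OF o2] unfolding Let_def .
  have EF: "?F \<union> ?F\<inverse> = ?E \<union> ?E\<inverse>"
  proof -
    have e1: "?F = (\<Union>c\<in>set cs. cycle_edges (gnorm A c))" by simp
    have "?F \<union> ?F\<inverse> = (\<Union>c\<in>set cs. cycle_edges (gnorm A c) \<union> (cycle_edges (gnorm A c))\<inverse>)"
      unfolding e1 converse_UNION UN_Un_distrib ..
    also have "\<dots> = (\<Union>c\<in>set cs. cycle_edges c \<union> (cycle_edges c)\<inverse>)"
    proof (rule SUP_cong)
      fix c assume "c \<in> set cs"
      then show "cycle_edges (gnorm A c) \<union> (cycle_edges (gnorm A c))\<inverse> = cycle_edges c \<union> (cycle_edges c)\<inverse>"
        using gnorm_edges cyc_ne[OF o2] by blast
    qed simp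
    also have "\<dots> = ?E \<union> ?E\<inverse>"
      unfolding converse_UNION UN_Un_distrib ..
    finally show ?thesis .
  qed
  have "A \<subseteq> ?E \<union> ?E\<inverse>" using q3 by (rule conjunct1)
  then have a1: "A \<subseteq> ?F \<union> ?F\<inverse>" unfolding EF .
  have q3b: "\<forall>(u, v)\<in>?E. (u, v) \<in> A \<or> (v, u) \<in> A" using q3 by (rule conjunct1[OF conjunct2])
  have a2': "(u, v) \<in> A \<or> (v, u) \<in> A" if uv: "(u, v) \<in> ?F" for u v
  proof -
    have "(u, v) \<in> ?F \<union> ?F\<inverse>" using uv by (rule UnI1)
    then have "(u, v) \<in> ?E \<union> ?E\<inverse>" unfolding EF .
    then have "(u, v) \<in> ?E \<or> (v, u) \<in> ?E" by (simp only: Un_iff converse_iff)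
    then show ?thesis
    proof
      assume "(u, v) \<in> ?E" from bspec[OF q3b this] show ?thesis by (simp only: case_prod_conv)
    next
      assume "(v, u) \<in> ?E"
      from bspec[OF q3b this] have "(v, u) \<in> A \<or> (u, v) \<in> A" by (simp only: case_prod_conv)
      then show ?thesis by (rule disjE) simp_all
    qed
  qed
  have a2: "\<forall>(u, v)\<in>?F. (u, v) \<in> A \<or> (v, u) \<in> A" 
  proof (rule ballI)
    fix p assume p: "p \<in> ?F"
    obtain u v where uv: "p = (u, v)" by (cases p)
    show "case p of (u, v) \<Rightarrow> (u, v) \<in> A \<or> (v, u) \<in> A" using a2'[of u v] p uv by simp
  qed
  have a3: "A \<inter> A\<inverse> = {}" using q3 by (rule conjunct2[OF conjunct2])
  show ?thesis unfolding oriented_2regular_def Let_def by (intro conjI p1 p2 a1 a2 a3)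
qed


theorem mainTheorem18:
  fixes cs :: "'a list list" and A :: "('a \<times> 'a) set" and k :: nat
  assumes "oriented_2regular cs A"
    and "2 \<le> length cs"
    and "2 \<le> k"
    and "\<forall>c\<in>set cs. k \<le> length c - 1"
    and "is_distance_set (verts cs) A {k}"
  shows "D_antimagic (verts cs) A {k} \<longleftrightarrow> unidirectional cs A"
proof
  assume am: "D_antimagic (verts cs) A {k}"
  show "unidirectional cs A"
  proof (rule ccontr)
    assume "\<not> unidirectional cs A"
    then obtain c where c: "c \<in> set cs" "\<not> cycle_edges c \<subseteq> A" "\<not> (cycle_edges c)\<inverse> \<subseteq> A"
      unfolding unidirectional_def by blast
    obtain x y where xy: "x \<in> set c" "y \<in> set c" "x \<noteq> y" "dead A x" "dead A y"
      using two_dead[OF assms(1) c(1) c(2) c(3)] by blast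
    from am obtain f where inj: "inj_on (D_weight (verts cs) A {k} f) (verts cs)"
      unfolding D_antimagic_def by blast
    have xv: "x \<in> verts cs" and yv: "y \<in> verts cs" using c(1) xy unfolding verts_def by blast+
    have "D_weight (verts cs) A {k} f x = D_weight (verts cs) A {k} f y"
      unfolding D_weight_def dead_nbhd[OF xy(4) assms(3)] dead_nbhd[OF xy(5) assms(3)] by simp
    from inj_onD[OF inj this xv yv] have "x = y" .
    then show False using xy(3) by simp
  qed
next
  assume u: "unidirectional cs A"
  let ?cs = "map (gnorm A) cs"
  have o2': "oriented_2regular ?cs A" by (rule o2_gnorm[OF assms(1)])
  have fwd: "\<forall>c\<in>set ?cs. cycle_edges c \<subseteq> A"
  proof
    fix c assume "c \<in> set ?cs"
    then obtain c0 where c0: "c0 \<in> set cs" "c = gnorm A c0" by auto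
    have "cycle_edges c0 \<subseteq> A \<or> (cycle_edges c0)\<inverse> \<subseteq> A" using u c0(1) unfolding unidirectional_def by blast
    then show "cycle_edges c \<subseteq> A" using gnorm_fwd[OF cyc_ne[OF assms(1) c0(1)]] c0(2) by blast
  qed
  have kn': "\<forall>c\<in>set ?cs. k < length c"
  proof
    fix c assume "c \<in> set ?cs"
    then obtain c0 where c0: "c0 \<in> set cs" "c = gnorm A c0" by auto
    have "3 \<le> length c0" using cyc[OF assms(1) c0(1)] by simp
    moreover have "k \<le> length c0 - 1" using assms(4) c0(1) by blast
    ultimately show "k < length c" using c0(2) by (simp add: gnorm_basic)
  qed
  have "D_antimagic (verts ?cs) A {k}" by (rule fwd_antimagic[OF o2' fwd kn'])
  then show "D_antimagic (verts cs) A {k}" by (simp only: verts_gnorm)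
qed

end
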